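(* Fix $\lambda\in[0,1)$ and a feasible path flow vector $f$, and let $Z(f,\xi)$ be an integrable random cost. For $\alpha\in(\lambda,1)$ define $$\bar\lambda(\alpha,\lambda)=\frac{\alpha-\lambda}{1+\alpha-2\lambda},\qquad \Phi_{\alpha,\lambda}(f)=\big(1-\bar\lambda(\alpha,\lambda)\big)\mathbb{E}[Z(f,\xi)]+\bar\lambda(\alpha,\lambda)\operatorname{CVaR}_\alpha(Z(f,\xi)).$$ Then $\alpha\mapsto\Phi_{\alpha,\lambda}(f)$ is non-decreasing on $(\lambda,1)$.
   Context: $\operatorname{CVaR}_\alpha(Y):=\inf_{\gamma\in\mathbb{R}}\{\gamma+\frac{1}{1-\alpha}\mathbb{E}[(Y-\gamma)_+]\}$. In the paper $Z(f,\xi)$ is the random TSUE system potential at path flows $f$; the case $\lambda<\alpha$ corresponds to a risk-averse traveler. *)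

theory Defs
  imports "HOL-Probability.Probability"
begin

definition CVaR :: "'a measure \<Rightarrow> real \<Rightarrow> ('a \<Rightarrow> real) \<Rightarrow> real" where
  "CVaR M \<alpha> Y = (INF \<gamma>::real. \<gamma> + 1 / (1 - \<alpha>) * (\<integral>x. max (Y x - \<gamma>) 0 \<partial>M))"

definition lambda_bar :: "real \<Rightarrow> real \<Rightarrow> real" where
  "lambda_bar \<alpha> lam = (\<alpha> - lam) / (1 + \<alpha> - 2 * lam)"

definition Phi :: "'a measure \<Rightarrow> real \<Rightarrow> real \<Rightarrow> ('a \<Rightarrow> real) \<Rightarrow> real" where
  "Phi M \<alpha> lam Y =
     (1 - lambda_bar \<alpha> lam) * (\<integral>x. Y x \<partial>M) + lambda_bar \<alpha> lam * CVaR M \<alpha> Y"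

end

theory Submission
  imports Defs
begin

lemma cvar_term_ge:
  fixes Y :: "'a \<Rightarrow> real"
  assumes P: "prob_space M" and I: "integrable M Y" and a: "0 \<le> \<alpha>" "\<alpha> < 1"
  shows "(\<integral>x. Y x \<partial>M) \<le> \<gamma> + 1 / (1 - \<alpha>) * (\<integral>x. max (Y x - \<gamma>) 0 \<partial>M)"
proof -
  interpret prob_space M by (rule P)
  have i3': "integrable M (\<lambda>x. Y x - \<gamma>)" using I by auto
  have i2: "integrable M (\<lambda>x. max (Y x - \<gamma>) 0)"
    using Bochner_Integration.integrable_max[OF i3' integrable_zero] by simp
  have i3: "integrable M (\<lambda>x. Y x - \<gamma>)" using I by auto
  have "(\<integral>x. Y x - \<gamma> \<partial>M) \<le> (\<integral>x. max (Y x - \<gamma>) 0 \<partial>M)"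
    by (rule integral_mono[OF i3 i2]) auto
  moreover have "(\<integral>x. Y x - \<gamma> \<partial>M) = (\<integral>x. Y x \<partial>M) - \<gamma>"
    using I by (simp add: prob_space)
  moreover have E0: "0 \<le> (\<integral>x. max (Y x - \<gamma>) 0 \<partial>M)" by (rule integral_nonneg_AE) auto
  moreover have "1 \<le> 1 / (1 - \<alpha>)" using a by (simp add: field_simps)
  ultimately have "(\<integral>x. max (Y x - \<gamma>) 0 \<partial>M) \<le> 1 / (1 - \<alpha>) * (\<integral>x. max (Y x - \<gamma>) 0 \<partial>M)"
    by (metis mult_right_mono mult_1)
  with \<open>(\<integral>x. Y x - \<gamma> \<partial>M) \<le> _\<close> \<open>(\<integral>x. Y x - \<gamma> \<partial>M) = _\<close> show ?thesis by linarith
qed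

lemma cvar_ge:
  fixes Y :: "'a \<Rightarrow> real"
  assumes P: "prob_space M" and I: "integrable M Y" and a: "0 \<le> \<alpha>" "\<alpha> < 1"
  shows "(\<integral>x. Y x \<partial>M) \<le> CVaR M \<alpha> Y"
  unfolding CVaR_def by (rule cINF_greatest) (use cvar_term_ge[OF assms] in simp_all)

lemma cvar_mono:
  fixes Y :: "'a \<Rightarrow> real"
  assumes P: "prob_space M" and I: "integrable M Y" and a: "0 \<le> \<alpha>" "\<alpha> \<le> \<beta>" "\<beta> < 1"
  shows "CVaR M \<alpha> Y \<le> CVaR M \<beta> Y"
  unfolding CVaR_def
proof (rule cINF_greatest)
  fix \<gamma> :: real
  have bdd: "bdd_below (range (\<lambda>\<gamma>. \<gamma> + 1 / (1 - \<alpha>) * (\<integral>x. max (Y x - \<gamma>) 0 \<partial>M)))"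
    using cvar_term_ge[OF P I a(1)] a by (intro bdd_belowI[where m="\<integral>x. Y x \<partial>M"]) auto
  have "(INF \<gamma>. \<gamma> + 1 / (1 - \<alpha>) * (\<integral>x. max (Y x - \<gamma>) 0 \<partial>M))
        \<le> \<gamma> + 1 / (1 - \<alpha>) * (\<integral>x. max (Y x - \<gamma>) 0 \<partial>M)"
    by (rule cINF_lower[OF bdd]) simp
  also have "\<dots> \<le> \<gamma> + 1 / (1 - \<beta>) * (\<integral>x. max (Y x - \<gamma>) 0 \<partial>M)"
  proof -
    interpret prob_space M by (rule P)
    have E0: "0 \<le> (\<integral>x. max (Y x - \<gamma>) 0 \<partial>M)" by (rule integral_nonneg_AE) auto
    have "1 / (1 - \<alpha>) \<le> 1 / (1 - \<beta>)" using a by (simp add: frac_le)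
    hence "1 / (1 - \<alpha>) * (\<integral>x. max (Y x - \<gamma>) 0 \<partial>M) \<le> 1 / (1 - \<beta>) * (\<integral>x. max (Y x - \<gamma>) 0 \<partial>M)"
      using E0 by (rule mult_right_mono)
    thus ?thesis by linarith
  qed
  finally show "(INF \<gamma>. \<gamma> + 1 / (1 - \<alpha>) * (\<integral>x. max (Y x - \<gamma>) 0 \<partial>M))
        \<le> \<gamma> + 1 / (1 - \<beta>) * (\<integral>x. max (Y x - \<gamma>) 0 \<partial>M)" .
qed simp

lemma lb_props:
  assumes "0 \<le> lam" "lam < 1" "lam < a" "a \<le> b"
  shows "0 \<le> lambda_bar a lam" "lambda_bar a lam \<le> lambda_bar b lam"
proof -
  have p1: "0 < 1 + a - 2 * lam" "0 < 1 + b - 2 * lam" using assms by auto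
  show "0 \<le> lambda_bar a lam" unfolding lambda_bar_def using p1 assms by simp
  have "(a - lam) * (1 + b - 2 * lam) \<le> (b - lam) * (1 + a - 2 * lam)"
  proof -
    have "(b - lam) * (1 + a - 2 * lam) - (a - lam) * (1 + b - 2 * lam) = (b - a) * (1 - lam)"
      by (simp add: algebra_simps)
    moreover have "0 \<le> (b - a) * (1 - lam)" using assms by simp
    ultimately show ?thesis by linarith
  qed
  thus "lambda_bar a lam \<le> lambda_bar b lam" unfolding lambda_bar_def
    using p1 by (simp add: divide_simps)
qed

theorem proposition5:
  fixes M :: "'w measure" and Z :: "'f \<Rightarrow> 'w \<Rightarrow> real" and f :: 'f
    and Feas :: "'f set" and lam :: real
  assumes "prob_space M"
    and "f \<in> Feas"
    and "integrable M (Z f)"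
    and "0 \<le> lam" and "lam < 1"
  shows "mono_on {lam<..<1} (\<lambda>\<alpha>. Phi M \<alpha> lam (Z f))"
proof (rule mono_onI)
  fix a b assume ab: "a \<in> {lam<..<1}" "b \<in> {lam<..<1}" "a \<le> b"
  define m where "m = (\<integral>x. Z f x \<partial>M)"
  have ph: "\<And>c. Phi M c lam (Z f) = m + lambda_bar c lam * (CVaR M c (Z f) - m)"
    unfolding Phi_def m_def by (simp add: algebra_simps)
  have l: "0 \<le> lambda_bar a lam" "lambda_bar a lam \<le> lambda_bar b lam"
    using lb_props[of lam a b] assms ab by auto
  have c1: "0 \<le> CVaR M a (Z f) - m" using cvar_ge[OF assms(1,3), of a] ab assms unfolding m_def by auto
  have c2: "CVaR M a (Z f) \<le> CVaR M b (Z f)" using cvar_mono[OF assms(1,3), of a b] ab assms by auto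
  have "lambda_bar a lam * (CVaR M a (Z f) - m) \<le> lambda_bar b lam * (CVaR M b (Z f) - m)"
    by (rule mult_mono) (use l c1 c2 in auto)
  thus "Phi M a lam (Z f) \<le> Phi M b lam (Z f)" unfolding ph by simp
qed

end
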